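(* If $X$ is a Rothberger space satisfying ${\sf S}_1(\mathcal{G}_K,\mathcal{G}_{D_\Gamma})$, then $X$ is productively weakly Rothberger: for every weakly Rothberger space $Y$, $X\times Y$ is weakly Rothberger.
   Context: All spaces are infinite ${\sf T}_1$ topological spaces. $\mathcal{G}_K$ is the family of all collections $\mathcal{U}$ of ${\sf G}_\delta$ subsets of $X$ with $X\notin\mathcal{U}$ such that each compact subset of $X$ is contained in some member of $\mathcal{U}$. $\mathcal{G}_{D_\Gamma}$ is the family of infinite collections $\mathcal{U}$ of ${\sf G}_\delta$ subsets of $X$ such that for each nonempty open $U\subseteq X$, $\{V\in\mathcal{U}:U\cap V=\emptyset\}$ is finite. ${\sf S}_1(\mathcal{A},\mathcal{B})$: for each sequence $(A_n)$ of elements of $\mathcal{A}$ there are $B_n\in A_n$ with $\{B_n:n\in\mathbb{N}\}\in\mathcal{B}$. Rothberger: for each sequence $(\mathcal{U}_n)$ of open covers there are $U_n\in\mathcal{U}_n$ with $\{U_n\}$ a cover. Weakly Rothberger: for each sequence $(\mathcal{U}_n)$ of open covers there are $U_n\in\mathcal{U}_n$ with $\bigcup_nU_n$ dense. *)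

theory Defs
  imports "HOL-Analysis.Analysis"
begin

text \<open>The whole space is the carrier type (UNIV); G-delta sets via the library predicate gdelta.\<close>

definition GK :: "'a::topological_space set set set" where
  "GK = {\<U>. (\<forall>V\<in>\<U>. gdelta V) \<and> UNIV \<notin> \<U> \<and>
             (\<forall>K. compact K \<longrightarrow> (\<exists>V\<in>\<U>. K \<subseteq> V))}"

definition GDGamma :: "'a::topological_space set set set" where
  "GDGamma = {\<U>. infinite \<U> \<and> (\<forall>V\<in>\<U>. gdelta V) \<and>
             (\<forall>W. open W \<and> W \<noteq> {} \<longrightarrow> finite {V\<in>\<U>. W \<inter> V = {}})}"

definition S1 :: "'b set set \<Rightarrow> 'b set set \<Rightarrow> bool" where
  "S1 \<A> \<B> \<longleftrightarrow> (\<forall>A::nat \<Rightarrow> 'b set. (\<forall>n. A n \<in> \<A>) \<longrightarrow>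
      (\<exists>B::nat \<Rightarrow> 'b. (\<forall>n. B n \<in> A n) \<and> range B \<in> \<B>))"

definition open_cover :: "'a::topological_space set set \<Rightarrow> bool" where
  "open_cover \<U> \<longleftrightarrow> (\<forall>V\<in>\<U>. open V) \<and> \<Union>\<U> = UNIV"

definition rothberger :: "'a::topological_space itself \<Rightarrow> bool" where
  "rothberger _ \<longleftrightarrow> (\<forall>\<U>::nat \<Rightarrow> 'a set set. (\<forall>n. open_cover (\<U> n)) \<longrightarrow>
      (\<exists>U. (\<forall>n. U n \<in> \<U> n) \<and> (\<Union>n. U n) = UNIV))"

definition weakly_rothberger :: "'a::topological_space itself \<Rightarrow> bool" where
  "weakly_rothberger _ \<longleftrightarrow> (\<forall>\<U>::nat \<Rightarrow> 'a set set. (\<forall>n. open_cover (\<U> n)) \<longrightarrow>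
      (\<exists>U. (\<forall>n. U n \<in> \<U> n) \<and> closure (\<Union>n. U n) = UNIV))"

end

theory Submission
  imports Defs "HOL-Library.Nat_Bijection"
begin

lemma step1:
  fixes \<W> :: "nat \<Rightarrow> ('a::topological_space \<times> 'b::topological_space) set set"
    and f :: "nat \<Rightarrow> nat"
  assumes rX: "rothberger TYPE('a)" and cov: "\<And>n. open_cover (\<W> n)" and K: "compact K"
  shows "\<exists>V W F c. open V \<and> y \<in> V \<and> open W \<and> K \<subseteq> W \<and> finite F \<and>
     (\<forall>i. c i \<in> \<W> (f i)) \<and> W \<times> V \<subseteq> \<Union>(c ` F)"
proof -
  define \<O> where "\<O> i = {U. open U \<and> (\<exists>V w. open V \<and> y \<in> V \<and> w \<in> \<W> (f i) \<and> U \<times> V \<subseteq> w)}" for i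
  have oc: "open_cover (\<O> i)" for i
  proof -
    have "\<exists>U\<in>\<O> i. x \<in> U" for x
    proof -
      have "(x, y) \<in> \<Union>(\<W> (f i))" using cov[of "f i"] unfolding open_cover_def by auto
      then obtain w where w: "w \<in> \<W> (f i)" "(x,y) \<in> w" by auto
      hence "open w" using cov[of "f i"] unfolding open_cover_def by auto
      from open_prod_elim[OF this w(2)] obtain A B where "open A" "open B" "(x,y) \<in> A \<times> B" "A \<times> B \<subseteq> w" .
      thus ?thesis using w unfolding \<O>_def by blast
    qed
    thus ?thesis unfolding open_cover_def \<O>_def by auto
  qed
  have "\<exists>U. (\<forall>n. U n \<in> \<O> n) \<and> (\<Union>n. U n) = UNIV"
    using rX[unfolded rothberger_def, rule_format, of \<O>] oc by simp
  then obtain U where U: "\<And>n. U n \<in> \<O> n" and Ucov: "(\<Union>n. U n) = UNIV"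
    by auto
  have "\<forall>i. \<exists>V w. open V \<and> y \<in> V \<and> w \<in> \<W> (f i) \<and> U i \<times> V \<subseteq> w"
    using U unfolding \<O>_def by blast
  then obtain Vf wf where Vw: "\<And>i. open (Vf i) \<and> y \<in> Vf i \<and> wf i \<in> \<W> (f i) \<and> U i \<times> Vf i \<subseteq> wf i"
    by metis
  have oU: "\<And>i. open (U i)" using U unfolding \<O>_def by auto
  have KU: "K \<subseteq> (\<Union>i\<in>UNIV. U i)" using Ucov by simp
  obtain F where F: "F \<subseteq> UNIV" "finite F" "K \<subseteq> (\<Union>i\<in>F. U i)"
    by (rule compactE_image[OF K _ KU]) (auto simp: oU)
  show ?thesis
  proof (intro exI conjI)
    show "open (\<Inter>(Vf ` F))" using F(2) Vw by auto
    show "y \<in> \<Inter>(Vf ` F)" using Vw by auto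
    show "open (\<Union>(U ` F))" using oU by auto
    show "K \<subseteq> \<Union>(U ` F)" using F by auto
    show "finite F" by fact
    show "\<forall>i. wf i \<in> \<W> (f i)" using Vw by auto
    show "\<Union>(U ` F) \<times> \<Inter>(Vf ` F) \<subseteq> \<Union>(wf ` F)"
    proof
      fix p assume "p \<in> \<Union>(U ` F) \<times> \<Inter>(Vf ` F)"
      then obtain a b i where "p = (a,b)" "i \<in> F" "a \<in> U i" "b \<in> Vf i" by auto
      thus "p \<in> \<Union>(wf ` F)" using Vw[of i] by auto
    qed
  qed
qed

lemma lemL:
  fixes \<W> :: "nat \<Rightarrow> ('a::topological_space \<times> 'b::topological_space) set set"
    and e :: "nat \<Rightarrow> nat"
  assumes rX: "rothberger TYPE('a)" and wY: "weakly_rothberger TYPE('b)"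
    and cov: "\<And>n. open_cover (\<W> n)" and K: "compact K"
  shows "\<exists>G d. gdelta G \<and> K \<subseteq> G \<and> (\<forall>m. d m \<in> \<W> (e m)) \<and> G \<times> UNIV \<subseteq> closure (\<Union> (range d))"
proof -
  define \<V> where "\<V> j = {V. open V \<and> (\<exists>W F c. open W \<and> K \<subseteq> W \<and> finite F \<and>
     (\<forall>i. c i \<in> \<W> (e (prod_encode (j,i)))) \<and> W \<times> V \<subseteq> \<Union>(c ` F))}" for j
  have oc: "open_cover (\<V> j)" for j
  proof -
    have "\<exists>V\<in>\<V> j. y \<in> V" for y
    proof -
      have "\<exists>V W F c. open V \<and> y \<in> V \<and> open W \<and> K \<subseteq> W \<and> finite F \<and>
        (\<forall>i. c i \<in> \<W> (e (prod_encode (j,i)))) \<and> W \<times> V \<subseteq> \<Union>(c ` F)"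
        by (rule step1[OF rX cov K])
      then obtain V W F c where "open V" "y \<in> V" "open W" "K \<subseteq> W" "finite F"
        "\<forall>i. c i \<in> \<W> (e (prod_encode (j,i)))" "W \<times> V \<subseteq> \<Union>(c ` F)"
        by blast
      hence "V \<in> \<V> j" unfolding \<V>_def by blast
      thus ?thesis using \<open>y \<in> V\<close> by blast
    qed
    thus ?thesis unfolding open_cover_def \<V>_def by auto
  qed
  have "\<exists>U. (\<forall>n. U n \<in> \<V> n) \<and> closure (\<Union>n. U n) = UNIV"
    using wY[unfolded weakly_rothberger_def, rule_format, of \<V>] oc by simp
  then obtain Vs where Vs: "\<And>j. Vs j \<in> \<V> j" and Vd: "closure (\<Union>j. Vs j) = UNIV"
    by auto
  have "\<forall>j. \<exists>W F c. open W \<and> K \<subseteq> W \<and> finite F \<and>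
     (\<forall>i. c i \<in> \<W> (e (prod_encode (j,i)))) \<and> W \<times> Vs j \<subseteq> \<Union>(c ` F)"
    using Vs unfolding \<V>_def by blast
  then obtain Wf Ff cf where P: "\<And>j. open (Wf j) \<and> K \<subseteq> Wf j \<and> finite (Ff j) \<and>
     (\<forall>i. cf j i \<in> \<W> (e (prod_encode (j,i)))) \<and> Wf j \<times> Vs j \<subseteq> \<Union>(cf j ` Ff j)"
    by metis
  define d where "d m = cf (fst (prod_decode m)) (snd (prod_decode m))" for m
  define G where "G = \<Inter>(range Wf)"
  have dm: "d m \<in> \<W> (e m)" for m
  proof -
    obtain j i where "prod_decode m = (j,i)" by (cases "prod_decode m")
    moreover then have "m = prod_encode (j,i)" by (metis prod_decode_inverse)
    ultimately show ?thesis using P[of j] unfolding d_def by auto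
  qed
  have sub: "G \<times> (\<Union>j. Vs j) \<subseteq> \<Union>(range d)"
  proof
    fix p assume "p \<in> G \<times> (\<Union>j. Vs j)"
    then obtain a b j where ab: "p = (a,b)" "a \<in> Wf j" "b \<in> Vs j" unfolding G_def by auto
    then obtain i where "i \<in> Ff j" "p \<in> cf j i" using P[of j] by blast
    moreover have "d (prod_encode (j,i)) = cf j i" unfolding d_def by simp
    ultimately show "p \<in> \<Union>(range d)" by (metis UN_I UNIV_I)
  qed
  have "G \<times> UNIV \<subseteq> closure G \<times> closure (\<Union>j. Vs j)" using Vd closure_subset by auto
  also have "\<dots> = closure (G \<times> (\<Union>j. Vs j))" by (simp add: closure_Times)
  also have "\<dots> \<subseteq> closure (\<Union>(range d))" using sub closure_mono by blast
  finally have cl: "G \<times> UNIV \<subseteq> closure (\<Union>(range d))" .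
  have "gdelta G" unfolding G_def using P by (auto intro: gdelta.intros)
  moreover have "K \<subseteq> G" unfolding G_def using P by auto
  ultimately show ?thesis using dm cl by blast
qed

theorem theorem5p16:
  assumes "infinite (UNIV :: 'a::t1_space set)"
    and "rothberger TYPE('a)"
    and "S1 (GK :: 'a set set set) GDGamma"
    and "infinite (UNIV :: 'b::t1_space set)"
    and "weakly_rothberger TYPE('b)"
  shows "weakly_rothberger TYPE('a \<times> 'b)"
  unfolding weakly_rothberger_def
proof (intro allI impI)
  fix \<W> :: "nat \<Rightarrow> ('a \<times> 'b) set set"
  assume cov: "\<forall>n. open_cover (\<W> n)"
  define \<G> where "\<G> k = {G. gdelta G \<and> (\<exists>d. (\<forall>m. d m \<in> \<W> (prod_encode (k,m))) \<and>
      G \<times> UNIV \<subseteq> closure (\<Union>(range d)))}" for k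
  have L': "\<exists>G\<in>\<G> k. K \<subseteq> G" if "compact K" for k K
    using lemL[OF assms(2) assms(5) _ that, of \<W> "\<lambda>m. prod_encode (k,m)"] cov
    unfolding \<G>_def by blast
  have key: "\<exists>U. (\<forall>n. U n \<in> \<W> n) \<and> closure (\<Union>n. U n) = UNIV"
    if Gs: "\<And>k. Gs k \<in> \<G> k" and Gd: "closure (\<Union>(range Gs)) = UNIV" for Gs
  proof -
    have "\<forall>k. \<exists>d. (\<forall>m. d m \<in> \<W> (prod_encode (k,m))) \<and> Gs k \<times> UNIV \<subseteq> closure (\<Union>(range d))"
      using Gs unfolding \<G>_def by blast
    then obtain D where D: "\<And>k. (\<forall>m. D k m \<in> \<W> (prod_encode (k,m))) \<and>
        Gs k \<times> UNIV \<subseteq> closure (\<Union>(range (D k)))" by metis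
    define U where "U n = D (fst (prod_decode n)) (snd (prod_decode n))" for n
    have Un: "U n \<in> \<W> n" for n
    proof -
      obtain j i where "prod_decode n = (j,i)" by (cases "prod_decode n")
      moreover then have "n = prod_encode (j,i)" by (metis prod_decode_inverse)
      ultimately show ?thesis using D[of j] unfolding U_def by auto
    qed
    have DU: "\<Union>(range (D k)) \<subseteq> \<Union>(range U)" for k
    proof
      fix p assume "p \<in> \<Union>(range (D k))"
      then obtain m where "p \<in> D k m" by auto
      moreover have "U (prod_encode (k,m)) = D k m" unfolding U_def by simp
      ultimately show "p \<in> \<Union>(range U)" by (metis UN_I UNIV_I)
    qed
    have "Gs k \<times> UNIV \<subseteq> closure (\<Union>(range U))" for k
      using D[of k] closure_mono[OF DU[of k]] by blast
    hence "(\<Union>(range Gs)) \<times> UNIV \<subseteq> closure (\<Union>(range U))" by blast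
    hence "closure ((\<Union>(range Gs)) \<times> UNIV) \<subseteq> closure (\<Union>(range U))"
      by (simp add: closure_minimal)
    hence "closure (\<Union>(range U)) = UNIV" using Gd by (simp add: closure_Times top_unique)
    thus ?thesis using Un by blast
  qed
  show "\<exists>U. (\<forall>n. U n \<in> \<W> n) \<and> closure (\<Union>n. U n) = UNIV"
  proof (cases "\<exists>k. UNIV \<in> \<G> k")
    case True
    then obtain k0 where k0: "UNIV \<in> \<G> k0" by blast
    have ne: "\<exists>G. G \<in> \<G> k" for k using L'[of "{}" k] by auto
    define Gs where "Gs k = (if k = k0 then UNIV else (SOME G. G \<in> \<G> k))" for k
    have "Gs k \<in> \<G> k" for k
    proof (cases "k = k0")
      case True thus ?thesis by (simp add: Gs_def k0)
    next
      case False thus ?thesis unfolding Gs_def using someI_ex[OF ne[of k]] by simp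
    qed
    moreover have "closure (\<Union>(range Gs)) = UNIV"
    proof -
      have g0: "Gs k0 = UNIV" by (simp add: Gs_def)
      have "UNIV \<subseteq> \<Union>(range Gs)"
      proof
        fix x :: 'a show "x \<in> \<Union>(range Gs)" using g0 by blast
      qed
      thus ?thesis using closure_subset[of "\<Union>(range Gs)"] by auto
    qed
    ultimately show ?thesis by (rule key)
  next
    case False
    have "\<G> k \<in> GK" for k
      unfolding GK_def using False L' by (auto simp: \<G>_def)
    then obtain Gs where Gs: "\<And>k. Gs k \<in> \<G> k" and R: "range Gs \<in> GDGamma"
      using assms(3) unfolding S1_def by blast
    have "closure (\<Union>(range Gs)) = UNIV"
    proof (rule ccontr)
      assume "closure (\<Union>(range Gs)) \<noteq> UNIV"
      define W where "W = - closure (\<Union>(range Gs))"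
      have "open W" "W \<noteq> {}" unfolding W_def using \<open>closure _ \<noteq> UNIV\<close> by auto
      have R': "\<forall>W. open W \<and> W \<noteq> {} \<longrightarrow> finite {V\<in>range Gs. W \<inter> V = {}}"
        and inf: "infinite (range Gs)" using R unfolding GDGamma_def by simp_all
      have fin: "finite {V\<in>range Gs. W \<inter> V = {}}" using R' \<open>open W\<close> \<open>W \<noteq> {}\<close> by simp
      have sk: "Gs k \<subseteq> closure (\<Union>(range Gs))" for k
        using closure_subset[of "\<Union>(range Gs)"] by blast
      have "{V\<in>range Gs. W \<inter> V = {}} = range Gs"
      proof (intro equalityI subsetI)
        fix V assume "V \<in> range Gs"
        then obtain k where "V = Gs k" by auto
        thus "V \<in> {V\<in>range Gs. W \<inter> V = {}}" using sk[of k] unfolding W_def by auto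
      qed auto
      moreover note inf
      ultimately show False using fin by simp
    qed
    thus ?thesis using key Gs by blast
  qed
qed

end
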